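(* Let $n\geq1$ and $\eta\in\Omega$. Then the set of vectors $\overline{T_\eta}\subset\mathbb C^{\lambda_{2,n}}$ is linearly independent.
   Context: $n\geq1$ is fixed. $\Lambda_{2,n}=\{\alpha\in\mathbb N^2:1\leq\alpha_1+\alpha_2\leq n\}$, $\lambda_{2,n}=|\Lambda_{2,n}|$; for $v\in\mathbb N^2$, $\bar v=\big(\binom{v_1}{\alpha_1}\binom{v_2}{\alpha_2}\big)_{\alpha\in\Lambda_{2,n}}\in\mathbb C^{\lambda_{2,n}}$. $\Omega$ is the set of sequences $\eta=(z,d_0,d_1,\ldots,d_r)$ with $z\in\{0,1\}$, $d_0=0$, $d_i\in\mathbb N\setminus\{0\}$ for $1\leq i\leq r$, and $\sum_{i=0}^r d_i=n$. For $j\in\{1,\ldots,n\}$ let $t\in\{1,\ldots,r\}$ be the unique index with $\sum_{i=0}^{t-1}d_i<j\leq\sum_{i=0}^t d_i$ and $c=j-\sum_{i=0}^{t-1}d_i$; define $v_{j,\eta}=(\sum_{i\text{ odd},i<t}d_i+c,0)$ if $z=1,t$ odd; $(0,\sum_{i\text{ even},i<t}d_i+c)$ if $z=1,t$ even; $(0,\sum_{i\text{ odd},i<t}d_i+c)$ if $z=0,t$ odd; $(\sum_{i\text{ even},i<t}d_i+c,0)$ if $z=0,t$ even. Set $T_{j,\eta}=\{v_{j,\eta}+p(1,1):0\leq p\leq n-j\}$ for $1\leq j\leq n$, $T_{0,\eta}=\{(p,p):1\leq p\leq n\}$, $T_\eta=\bigcup_{j=0}^nT_{j,\eta}$ and $\overline{T_\eta}=\{\bar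 v:v\in T_\eta\}$. *)

theory Defs
  imports Complex_Main "HOL-Library.Function_Algebras"
begin

definition Lam :: "nat \<Rightarrow> (nat \<times> nat) set" where
  "Lam n = {a. 1 \<le> fst a + snd a \<and> fst a + snd a \<le> n}"

text \<open>The vector bar v in C^{Lambda_{2,n}}, represented as a function on N^2
  that vanishes outside Lambda_{2,n}.\<close>
definition vbar :: "nat \<Rightarrow> nat \<times> nat \<Rightarrow> (nat \<times> nat \<Rightarrow> complex)" where
  "vbar n v = (\<lambda>a. if a \<in> Lam n then of_nat ((fst v choose fst a) * (snd v choose snd a)) else 0)"

definition Omega :: "nat \<Rightarrow> (nat \<times> nat list) set" where
  "Omega n = {(z, ds). z \<in> {0, 1} \<and> ds \<noteq> [] \<and> ds ! 0 = 0 \<and>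
      (\<forall>i\<in>{1..<length ds}. 0 < ds ! i) \<and> sum_list ds = n}"

definition psum :: "nat list \<Rightarrow> nat \<Rightarrow> nat" where
  "psum ds k = (\<Sum>i<k. ds ! i)"

definition tidx :: "nat list \<Rightarrow> nat \<Rightarrow> nat" where
  "tidx ds j = (THE t. 1 \<le> t \<and> t \<le> length ds - 1 \<and> psum ds t < j \<and> j \<le> psum ds (Suc t))"

definition vvec :: "nat \<Rightarrow> nat list \<Rightarrow> nat \<Rightarrow> nat \<times> nat" where
  "vvec z ds j = (let t = tidx ds j; c = j - psum ds t;
      so = (\<Sum>i\<in>{i. i < t \<and> odd i}. ds ! i);
      se = (\<Sum>i\<in>{i. i < t \<and> even i}. ds ! i) in
     if z = 1 then (if odd t then (so + c, 0) else (0, se + c))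
     else (if odd t then (0, so + c) else (se + c, 0)))"

definition Tj :: "nat \<Rightarrow> nat \<times> nat list \<Rightarrow> nat \<Rightarrow> (nat \<times> nat) set" where
  "Tj n eta j = (if j = 0 then {(p, p) | p. 1 \<le> p \<and> p \<le> n}
     else {(fst (vvec (fst eta) (snd eta) j) + p, snd (vvec (fst eta) (snd eta) j) + p) | p. p \<le> n - j})"

definition Teta :: "nat \<Rightarrow> nat \<times> nat list \<Rightarrow> (nat \<times> nat) set" where
  "Teta n eta = (\<Union>j\<in>{0..n}. Tj n eta j)"

definition Tbar :: "nat \<Rightarrow> nat \<times> nat list \<Rightarrow> (nat \<times> nat \<Rightarrow> complex) set" where
  "Tbar n eta = vbar n ` Teta n eta"

end

theory Submission
  imports Defs
begin

lemma sum_app: "(sum f A) x = sum (\<lambda>a. f a x) A"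
  by (induction A rule: infinite_finite_induct) auto

lemma mod_fun: "module (\<lambda>(c::complex) (f::nat \<times> nat \<Rightarrow> complex). (\<lambda>a. c * f a))"
  by unfold_locales (auto simp: fun_eq_iff algebra_simps)

inductive_set Dp :: "nat \<Rightarrow> (nat \<times> nat \<Rightarrow> complex) set" for d where
  bin: "a + b \<le> d \<Longrightarrow> (\<lambda>v. of_nat ((fst v choose a) * (snd v choose b))) \<in> Dp d"
| add: "f \<in> Dp d \<Longrightarrow> g \<in> Dp d \<Longrightarrow> (\<lambda>v. f v + g v) \<in> Dp d"
| scl: "f \<in> Dp d \<Longrightarrow> (\<lambda>v. c * f v) \<in> Dp d"

lemma Dp_mono: "f \<in> Dp d \<Longrightarrow> d \<le> e \<Longrightarrow> f \<in> Dp e"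
proof (induction rule: Dp.induct)
  case (bin a b) then show ?case by (intro Dp.bin) simp
next
  case (add f g) then show ?case by (intro Dp.add) auto
next
  case (scl f c) then show ?case by (intro Dp.scl) auto
qed

lemma binom_x: "x * (x choose a) = Suc a * (x choose Suc a) + a * (x choose a)"
proof (cases "a \<le> x")
  case True
  have "Suc a * (x choose Suc a) = (x - a) * (x choose a)"
    using binomial_absorption binomial_absorb_comp by metis
  then show ?thesis using True by (simp add: algebra_simps)
qed (simp add: binomial_eq_0)

lemma Dp_mulx: "f \<in> Dp d \<Longrightarrow> (\<lambda>v. of_nat (fst v) * f v) \<in> Dp (Suc d)"
proof (induction rule: Dp.induct)
  case (bin a b)
  have e: "(\<lambda>v. of_nat (fst v) * (of_nat ((fst v choose a) * (snd v choose b)) :: complex))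
     = (\<lambda>v. of_nat (Suc a) * of_nat ((fst v choose Suc a) * (snd v choose b))
          + of_nat a * of_nat ((fst v choose a) * (snd v choose b)))"
  proof
    fix v :: "nat \<times> nat"
    have "fst v * ((fst v choose a) * (snd v choose b)) = Suc a * ((fst v choose Suc a) * (snd v choose b))
          + a * ((fst v choose a) * (snd v choose b))"
      using arg_cong[OF binom_x[of "fst v" a], of "\<lambda>z. z * (snd v choose b)"] by (simp add: algebra_simps)
    then show "of_nat (fst v) * (of_nat ((fst v choose a) * (snd v choose b)) :: complex)
     = of_nat (Suc a) * of_nat ((fst v choose Suc a) * (snd v choose b))
          + of_nat a * of_nat ((fst v choose a) * (snd v choose b))"
      by (subst of_nat_mult[symmetric])+ (subst of_nat_add[symmetric], simp only:)
  qed
  show ?case unfolding e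
    using bin by (intro Dp.add Dp.scl Dp.bin) auto
next
  case (add f g)
  then show ?case using Dp.add[OF add.IH] by (simp add: distrib_left)
next
  case (scl f c)
  then show ?case using Dp.scl[OF scl.IH, of c] by (simp add: mult.left_commute)
qed

lemma Dp_muly: "f \<in> Dp d \<Longrightarrow> (\<lambda>v. of_nat (snd v) * f v) \<in> Dp (Suc d)"
proof (induction rule: Dp.induct)
  case (bin a b)
  have e: "(\<lambda>v. of_nat (snd v) * (of_nat ((fst v choose a) * (snd v choose b)) :: complex))
     = (\<lambda>v. of_nat (Suc b) * of_nat ((fst v choose a) * (snd v choose Suc b))
          + of_nat b * of_nat ((fst v choose a) * (snd v choose b)))"
  proof
    fix v :: "nat \<times> nat"
    have "snd v * ((fst v choose a) * (snd v choose b)) = Suc b * ((fst v choose a) * (snd v choose Suc b))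
          + b * ((fst v choose a) * (snd v choose b))"
      using arg_cong[OF binom_x[of "snd v" b], of "\<lambda>z. z * (fst v choose a)"] by (simp add: algebra_simps)
    then show "of_nat (snd v) * (of_nat ((fst v choose a) * (snd v choose b)) :: complex)
     = of_nat (Suc b) * of_nat ((fst v choose a) * (snd v choose Suc b))
          + of_nat b * of_nat ((fst v choose a) * (snd v choose b))"
      by (subst of_nat_mult[symmetric])+ (subst of_nat_add[symmetric], simp only:)
  qed
  show ?case unfolding e
    using bin by (intro Dp.add Dp.scl Dp.bin) auto
next
  case (add f g)
  then show ?case using Dp.add[OF add.IH] by (simp add: distrib_left)
next
  case (scl f c)
  then show ?case using Dp.scl[OF scl.IH, of c] by (simp add: mult.left_commute)
qed

lemma Dp_lin:
  assumes "f \<in> Dp d"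
  shows "(\<lambda>v. (\<alpha> * of_nat (fst v) + \<beta> * of_nat (snd v) + \<gamma>) * f v) \<in> Dp (Suc d)"
proof -
  have "(\<lambda>v. \<alpha> * (of_nat (fst v) * f v) + \<beta> * (of_nat (snd v) * f v) + \<gamma> * f v) \<in> Dp (Suc d)"
  proof (rule Dp.add[OF Dp.add])
    show "(\<lambda>v. \<alpha> * (of_nat (fst v) * f v)) \<in> Dp (Suc d)"
      by (rule Dp.scl[OF Dp_mulx[OF assms]])
    show "(\<lambda>v. \<beta> * (of_nat (snd v) * f v)) \<in> Dp (Suc d)"
      by (rule Dp.scl[OF Dp_muly[OF assms]])
    show "(\<lambda>v. \<gamma> * f v) \<in> Dp (Suc d)"
      by (rule Dp.scl[OF Dp_mono[OF assms]]) simp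
  qed
  then show ?thesis by (simp add: algebra_simps)
qed

lemma Dp_one: "(\<lambda>v. 1) \<in> Dp d"
  using Dp.bin[of 0 0 d] by simp

lemma Dp_prod:
  assumes "finite I" "f \<in> Dp d"
  shows "(\<lambda>v. (\<Prod>i\<in>I. \<alpha> i * of_nat (fst v) + \<beta> i * of_nat (snd v) + \<gamma> i) * f v) \<in> Dp (card I + d)"
  using assms(1)
proof (induction I rule: finite_induct)
  case empty
  then show ?case using assms(2) by simp
next
  case (insert i I)
  then show ?case using Dp_lin[OF insert.IH, of "\<alpha> i" "\<beta> i" "\<gamma> i"]
    by (simp add: mult.assoc)
qed

lemma Dp_sum:
  assumes "\<And>a b. a + b \<le> n \<Longrightarrow> (\<Sum>v\<in>A. w v * of_nat ((fst v choose a) * (snd v choose b))) = 0"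
    and "f \<in> Dp n"
  shows "(\<Sum>v\<in>A. w v * f v) = 0"
  using assms(2)
proof (induction rule: Dp.induct)
  case (bin a b) then show ?case using assms(1) by simp
next
  case (add f g) then show ?case by (simp add: distrib_left sum.distrib)
next
  case (scl f c)
  have "(\<Sum>v\<in>A. w v * (c * f v)) = c * (\<Sum>v\<in>A. w v * f v)"
    by (simp add: sum_distrib_left mult.left_commute)
  then show ?case using scl by simp
qed

lemma key:
  fixes B :: "nat \<Rightarrow> nat \<times> nat" and w :: "nat \<times> nat \<Rightarrow> complex"
  defines "off \<equiv> (\<lambda>j. int (fst (B j)) - int (snd (B j)))"
  defines "P \<equiv> (\<lambda>j p. (fst (B j) + p, snd (B j) + p))"
  assumes inj: "inj_on off {..n}"
    and fin: "finite A"
    and AS: "\<And>v. v \<in> A \<Longrightarrow> \<exists>j p. j \<le> n \<and> p \<le> n - j \<and> v = P j p"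
    and H: "\<And>f. f \<in> Dp n \<Longrightarrow> (\<Sum>v\<in>A. w v * f v) = 0"
  shows "\<forall>m j p. n - j = m \<longrightarrow> j \<le> n \<longrightarrow> p \<le> n - j \<longrightarrow> P j p \<in> A \<longrightarrow> w (P j p) = 0"
proof (rule allI)
  fix m
  show "\<forall>j p. n - j = m \<longrightarrow> j \<le> n \<longrightarrow> p \<le> n - j \<longrightarrow> P j p \<in> A \<longrightarrow> w (P j p) = 0"
  proof (induction m rule: less_induct)
    case (less m)
    show ?case
    proof (intro allI impI)
      fix j p assume m: "n - j = m" and jn: "j \<le> n" and pj: "p \<le> n - j" and PA: "P j p \<in> A"
      define F where "F = (\<lambda>v::nat\<times>nat. (\<Prod>i\<in>{..<j}. 1 * of_nat (fst v) + (-1) * of_nat (snd v) + (- of_int (off i)))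
          * ((\<Prod>q\<in>{..n-j}-{p}. 1 * of_nat (fst v) + 0 * of_nat (snd v) + (- of_nat (fst (B j) + q))) * 1) :: complex)"
      have cardJ: "card ({..n-j}-{p}) = n - j" using pj by simp
      have "F \<in> Dp (card {..<j} + (card ({..n-j}-{p}) + 0))"
        unfolding F_def by (intro Dp_prod Dp_one) auto
      then have FD: "F \<in> Dp n" using cardJ jn by simp
      have sum0: "(\<Sum>v\<in>A. w v * F v) = 0" using H[OF FD] .
      have rest: "(\<Sum>v\<in>A - {P j p}. w v * F v) = 0"
      proof (rule sum.neutral, intro ballI)
        fix v assume v: "v \<in> A - {P j p}"
        then obtain j' p' where j': "j' \<le> n" "p' \<le> n - j'" "v = P j' p'" using AS by blast
        consider "j' < j" | "j < j'" | "j' = j" by linarith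
        then show "w v * F v = 0"
        proof cases
          case 1
          have "(\<Prod>i\<in>{..<j}. 1 * of_nat (fst v) + (-1) * of_nat (snd v) + (- of_int (off i)) :: complex) = 0"
            using 1 j' by (auto simp: prod_zero_iff P_def off_def intro!: bexI[of _ j'])
          then show ?thesis unfolding F_def by simp
        next
          case 2
          have "w v = 0" using less.IH[of "n - j'"] 2 j' v jn m by auto
          then show ?thesis by simp
        next
          case 3
          then have "p' \<noteq> p" using v j' by auto
          then have "(\<Prod>q\<in>{..n-j}-{p}. 1 * of_nat (fst v) + 0 * of_nat (snd v) + (- of_nat (fst (B j) + q)) :: complex) = 0"
            using 3 j' by (auto simp: prod_zero_iff P_def intro!: bexI[of _ p'])
          then show ?thesis unfolding F_def by simp
        qed
      qed
      have "(\<Sum>v\<in>A. w v * F v) = w (P j p) * F (P j p) + (\<Sum>v\<in>A - {P j p}. w v * F v)"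
        using sum.remove[OF fin PA] .
      then have wF: "w (P j p) * F (P j p) = 0" using sum0 rest by simp
      have "F (P j p) \<noteq> 0"
      proof -
        have a: "(1 * of_nat (fst (P j p)) + (-1) * of_nat (snd (P j p)) + (- of_int (off i)) :: complex) \<noteq> 0"
          if "i < j" for i
        proof -
          have "off i \<noteq> off j" using inj that jn by (auto dest: inj_onD)
          moreover have "(1 * of_nat (fst (P j p)) + (-1) * of_nat (snd (P j p)) + (- of_int (off i)) :: complex)
              = of_int (off j - off i)" by (simp add: P_def off_def)
          ultimately show ?thesis by simp
        qed
        have b: "(1 * of_nat (fst (P j p)) + 0 * of_nat (snd (P j p)) + (- of_nat (fst (B j) + q)) :: complex) \<noteq> 0"
          if "q \<noteq> p" for q
          using that by (simp add: P_def)
        show ?thesis unfolding F_def using a b by (simp add: prod_zero_iff)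
      qed
      then show "w (P j p) = 0" using wF by simp
    qed
  qed
qed

lemma psum_mono: "k \<le> k' \<Longrightarrow> psum ds k \<le> psum ds k'"
  unfolding psum_def by (rule sum_mono2) auto

lemma psum_Suc: "psum ds (Suc k) = psum ds k + ds ! k"
  by (simp add: psum_def)

lemma tidx_prop:
  assumes d0: "ds ! 0 = 0" and sl: "sum_list ds = n" and j1: "1 \<le> j" and jn: "j \<le> n"
  shows "1 \<le> tidx ds j \<and> tidx ds j \<le> length ds - 1 \<and> psum ds (tidx ds j) < j \<and> j \<le> psum ds (Suc (tidx ds j))"
proof -
  have plen: "psum ds (length ds) = n"
    using sl by (simp add: psum_def sum_list_sum_nth atLeast0LessThan)
  define k0 where "k0 = (LEAST k. j \<le> psum ds k)"
  have ex: "j \<le> psum ds (length ds)" using plen jn by simp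
  have k0a: "j \<le> psum ds k0" unfolding k0_def by (rule LeastI[of _ "length ds"]) (rule ex)
  have k0b: "k0 \<le> length ds" unfolding k0_def by (rule Least_le) (rule ex)
  have p0: "psum ds 0 = 0" by (simp add: psum_def)
  have p1: "psum ds 1 = 0" using d0 by (simp add: psum_def)
  have "k0 \<noteq> 0" using k0a p0 j1 by (cases "k0 = 0") auto
  moreover have "k0 \<noteq> 1" using k0a p1 j1 by (cases "k0 = 1") auto
  ultimately have k02: "2 \<le> k0" by linarith
  define t where "t = k0 - 1"
  have tS: "Suc t = k0" using k02 by (simp add: t_def)
  have pt: "psum ds t < j"
  proof -
    have "t < k0" using tS by simp
    then have "\<not> j \<le> psum ds t" unfolding k0_def by (rule not_less_Least)
    then show ?thesis by simp
  qed
  define Q where "Q = (\<lambda>t. 1 \<le> t \<and> t \<le> length ds - 1 \<and> psum ds t < j \<and> j \<le> psum ds (Suc t))"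
  have Qt: "Q t" unfolding Q_def using k02 k0b pt k0a tS by (auto simp: t_def)
  have uniq: "t' = t" if "Q t'" for t'
  proof (rule ccontr)
    assume "t' \<noteq> t"
    then consider "t' < t" | "t < t'" by linarith
    then show False
    proof cases
      case 1
      then have "psum ds (Suc t') \<le> psum ds t" by (intro psum_mono) simp
      then show False using that Qt unfolding Q_def by simp
    next
      case 2
      then have "psum ds (Suc t) \<le> psum ds t'" by (intro psum_mono) simp
      then show False using that Qt unfolding Q_def by simp
    qed
  qed
  have "tidx ds j = (THE t. Q t)" unfolding tidx_def Q_def by (rule refl)
  also have "\<dots> = t" by (rule the_equality[where P=Q, OF Qt uniq])
  finally have "tidx ds j = t" .
  then show ?thesis using Qt unfolding Q_def by simp
qed

lemma tidx_mono:
  assumes d0: "ds ! 0 = 0" and sl: "sum_list ds = n" and j1: "1 \<le> j" and jj: "j \<le> j'" and jn: "j' \<le> n"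
  shows "tidx ds j \<le> tidx ds j'"
proof (rule ccontr)
  assume "\<not> ?thesis"
  then have "psum ds (Suc (tidx ds j')) \<le> psum ds (tidx ds j)" by (intro psum_mono) simp
  moreover have "psum ds (tidx ds j) < j" using tidx_prop[OF d0 sl j1] jj jn by simp
  moreover have "j' \<le> psum ds (Suc (tidx ds j'))" using tidx_prop[OF d0 sl _ jn] j1 jj by simp
  ultimately show False using jj by simp
qed

definition sp :: "(nat \<Rightarrow> bool) \<Rightarrow> nat list \<Rightarrow> nat \<Rightarrow> nat" where
  "sp Q ds t = (\<Sum>i\<in>{i. i < t \<and> Q i}. ds ! i)"

lemma sp_step:
  assumes "Q t" "t < t'"
  shows "sp Q ds t + ds ! t \<le> sp Q ds t'"
proof -
  have "sp Q ds t + ds ! t = (\<Sum>i\<in>insert t {i. i < t \<and> Q i}. ds ! i)"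
    unfolding sp_def by (subst sum.insert) auto
  also have "\<dots> \<le> sp Q ds t'" unfolding sp_def
    using assms by (intro sum_mono2) auto
  finally show ?thesis .
qed

definition gv :: "nat list \<Rightarrow> nat \<Rightarrow> nat" where
  "gv ds j = (let t = tidx ds j; c = j - psum ds t in
     if odd t then sp odd ds t + c else sp even ds t + c)"

lemma vvec_off:
  "int (fst (vvec z ds j)) - int (snd (vvec z ds j)) =
    (if odd (tidx ds j) = (z = 1) then int (gv ds j) else - int (gv ds j))"
  unfolding vvec_def gv_def sp_def Let_def by auto

lemma gv_pos:
  assumes "ds ! 0 = 0" "sum_list ds = n" "1 \<le> j" "j \<le> n"
  shows "1 \<le> gv ds j"
  using tidx_prop[OF assms] unfolding gv_def Let_def by auto

lemma gv_mono:
  assumes d0: "ds ! 0 = 0" and sl: "sum_list ds = n" and j1: "1 \<le> j" and jj: "j < j'" and jn: "j' \<le> n"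
    and par: "odd (tidx ds j) = odd (tidx ds j')"
  shows "gv ds j < gv ds j'"
proof -
  define t where "t = tidx ds j"
  define t' where "t' = tidx ds j'"
  have tt: "t \<le> t'" unfolding t_def t'_def using tidx_mono[OF d0 sl j1 _ jn] jj by simp
  have P1: "1 \<le> t \<and> psum ds t < j \<and> j \<le> psum ds (Suc t)" using tidx_prop[OF d0 sl j1] jj jn
    unfolding t_def by simp
  have P2: "psum ds t' < j' \<and> j' \<le> psum ds (Suc t')" using tidx_prop[OF d0 sl _ jn] j1 jj
    unfolding t'_def by simp
  have cle: "j - psum ds t \<le> ds ! t" using P1 psum_Suc[of ds t] by (elim conjE) linarith
  show ?thesis
  proof (cases "t = t'")
    case True
    then show ?thesis using P1 P2 jj unfolding gv_def Let_def t_def[symmetric] t'_def[symmetric] by auto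
  next
    case False
    then have lt: "t < t'" using tt by simp
    show ?thesis
    proof (cases "odd t")
      case True
      have "sp odd ds t + ds ! t \<le> sp odd ds t'" using sp_step[of odd t t' ds] True lt by simp
      then show ?thesis using True par cle P2 unfolding gv_def Let_def t_def[symmetric] t'_def[symmetric] by auto
    next
      case False
      have "sp even ds t + ds ! t \<le> sp even ds t'" using sp_step[of even t t' ds] False lt by simp
      then show ?thesis using False par cle P2 unfolding gv_def Let_def t_def[symmetric] t'_def[symmetric] by auto
    qed
  qed
qed

lemma off_inj:
  fixes z :: nat
  assumes d0: "ds ! 0 = 0" and sl: "sum_list ds = n"
  defines "B \<equiv> (\<lambda>j. if j = 0 then (0, 0) else vvec z ds j)"
  shows "inj_on (\<lambda>j. int (fst (B j)) - int (snd (B j))) {..n}"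
proof -
  define off where "off = (\<lambda>j. int (fst (B j)) - int (snd (B j)))"
  have offj: "off j = (if odd (tidx ds j) = (z = 1) then int (gv ds j) else - int (gv ds j))"
    if "1 \<le> j" for j using that vvec_off[of z ds j] unfolding off_def B_def by simp
  have lt: "off j \<noteq> off j'" if "j < j'" "j' \<le> n" for j j'
  proof (cases "j = 0")
    case True
    have "1 \<le> gv ds j'" using gv_pos[OF d0 sl, of j'] that by simp
    then show ?thesis using True offj[of j'] that by (simp add: off_def B_def)
  next
    case False
    have g1: "1 \<le> gv ds j" "1 \<le> gv ds j'" using gv_pos[OF d0 sl, of j] gv_pos[OF d0 sl, of j'] that False by auto
    show ?thesis
    proof (cases "odd (tidx ds j) = odd (tidx ds j')")
      case True
      have "gv ds j < gv ds j'" using gv_mono[OF d0 sl _ that(1) that(2) True] False by simp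
      then show ?thesis using offj[of j] offj[of j'] False that True by auto
    next
      case F2: False
      then show ?thesis using offj[of j] offj[of j'] False that g1 by auto
    qed
  qed
  show ?thesis unfolding off_def[symmetric]
  proof (rule inj_onI)
    fix x y assume "x \<in> {..n}" "y \<in> {..n}" "off x = off y"
    then show "x = y" using lt[of x y] lt[of y x] by (cases x y rule: linorder_cases) auto
  qed
qed

lemma vbar_inj:
  assumes "1 \<le> n"
  shows "inj (vbar n)"
proof (rule injI)
  fix x y assume e: "vbar n x = vbar n y"
  have l1: "(1, 0) \<in> Lam n" "(0, 1) \<in> Lam n" using assms by (auto simp: Lam_def)
  have "vbar n x (1, 0) = vbar n y (1, 0)" "vbar n x (0, 1) = vbar n y (0, 1)" using e by auto
  then have "fst x = fst y" "snd x = snd y" using l1 by (auto simp: vbar_def)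
  then show "x = y" by (simp add: prod_eq_iff)
qed

theorem proposition2p9:
  fixes n :: nat and eta :: "nat \<times> nat list"
  assumes "1 \<le> n" and "eta \<in> Omega n"
  shows "\<not> module.dependent (\<lambda>(c::complex) (f::nat \<times> nat \<Rightarrow> complex). (\<lambda>a. c * f a)) (Tbar n eta)"
proof
  assume dep: "module.dependent (\<lambda>(c::complex) (f::nat \<times> nat \<Rightarrow> complex). (\<lambda>a. c * f a)) (Tbar n eta)"
  obtain z ds where eta: "eta = (z, ds)" by (cases eta)
  have d0: "ds ! 0 = 0" and sl: "sum_list ds = n" using assms(2) eta by (auto simp: Omega_def)
  define B where "B = (\<lambda>j. if j = 0 then (0::nat, 0::nat) else vvec z ds j)"
  define off where "off = (\<lambda>j. int (fst (B j)) - int (snd (B j)))"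
  have inj: "inj_on off {..n}" unfolding off_def B_def by (rule off_inj[OF d0 sl])
  obtain t u where t: "finite t" "t \<subseteq> Tbar n eta"
    and su: "(\<Sum>v\<in>t. (\<lambda>a. u v * v a)) = 0" and nz: "\<exists>v\<in>t. u v \<noteq> 0"
    using dep unfolding module.dependent_explicit[OF mod_fun] by blast
  define T' where "T' = {x \<in> Teta n eta. vbar n x \<in> t}"
  have vi: "inj (vbar n)" by (rule vbar_inj[OF assms(1)])
  have tT: "t = vbar n ` T'" using t(2) unfolding T'_def Tbar_def by auto
  have finT: "finite T'" using t(1) tT vi by (metis finite_imageD inj_on_subset subset_UNIV)
  have Teta_sub: "\<exists>j p. j \<le> n \<and> p \<le> n - j \<and> v = (fst (B j) + p, snd (B j) + p)" if vT: "v \<in> Teta n eta" for v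
  proof -
    obtain j where j: "j \<in> {0..n}" "v \<in> Tj n eta j" using vT unfolding Teta_def by auto
    show ?thesis
    proof (cases "j = 0")
      case True
      then obtain p where "v = (p, p)" "p \<le> n" using j by (auto simp: Tj_def)
      then show ?thesis using True by (intro exI[of _ 0] exI[of _ p]) (simp add: B_def)
    next
      case False
      then obtain p where "v = (fst (vvec z ds j) + p, snd (vvec z ds j) + p)" "p \<le> n - j"
        using j eta by (auto simp: Tj_def)
      then show ?thesis using False j by (intro exI[of _ j] exI[of _ p]) (simp add: B_def)
    qed
  qed
  have z0: "(0, 0) \<notin> Teta n eta"
  proof
    assume "(0, 0) \<in> Teta n eta"
    then obtain j where j: "j \<in> {0..n}" "(0,0) \<in> Tj n eta j" unfolding Teta_def by auto
    show False
    proof (cases "j = 0")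
      case True then show False using j by (auto simp: Tj_def)
    next
      case False
      then have "vvec z ds j = (0, 0)" using j eta by (auto simp: Tj_def prod_eq_iff)
      then have "off j = off 0" using False by (simp add: off_def B_def)
      then show False using inj j False by (auto dest: inj_onD)
    qed
  qed
  have sumT: "(\<Sum>x\<in>T'. u (vbar n x) * vbar n x a) = 0" for a
  proof -
    have "(\<Sum>v\<in>t. u v * v a) = 0" using su sum_app[of "\<lambda>v. (\<lambda>a. u v * v a)" t a] by simp
    then show ?thesis unfolding tT by (subst (asm) sum.reindex) (auto intro: inj_on_subset[OF vi])
  qed
  define w where "w = (\<lambda>v. if v = (0, 0) then - (\<Sum>x\<in>T'. u (vbar n x)) else u (vbar n v))"
  define A where "A = insert (0, 0) T'"
  have z0T: "(0, 0) \<notin> T'" using z0 unfolding T'_def by auto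
  have finA: "finite A" using finT unfolding A_def by simp
  have AS: "\<exists>j p. j \<le> n \<and> p \<le> n - j \<and> v = (fst (B j) + p, snd (B j) + p)" if "v \<in> A" for v
  proof (cases "v = (0, 0)")
    case True then show ?thesis by (intro exI[of _ 0] exI[of _ 0]) (simp add: B_def)
  next
    case False then show ?thesis using that Teta_sub unfolding A_def T'_def by auto
  qed
  have wT: "w x = u (vbar n x)" if "x \<in> T'" for x using that z0T unfolding w_def by auto
  have H: "(\<Sum>v\<in>A. w v * f v) = 0" if "f \<in> Dp n" for f
  proof (rule Dp_sum[OF _ that])
    fix a b assume ab: "a + b \<le> n"
    have "(\<Sum>v\<in>A. w v * of_nat ((fst v choose a) * (snd v choose b)))
       = w (0, 0) * of_nat ((0 choose a) * (0 choose b)) + (\<Sum>v\<in>T'. u (vbar n v) * of_nat ((fst v choose a) * (snd v choose b)))"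
      unfolding A_def using finT z0T wT by (simp add: sum.insert)
    also have "\<dots> = 0"
    proof (cases "a = 0 \<and> b = 0")
      case True then show ?thesis by (simp add: w_def)
    next
      case False
      then have L: "(a, b) \<in> Lam n" using ab by (auto simp: Lam_def)
      have "(\<Sum>v\<in>T'. u (vbar n v) * of_nat ((fst v choose a) * (snd v choose b))) = 
            (\<Sum>x\<in>T'. u (vbar n x) * vbar n x (a, b))" using L by (simp add: vbar_def)
      also have "\<dots> = 0" by (rule sumT)
      finally show ?thesis using False by (auto simp: binomial_eq_0)
    qed
    finally show "(\<Sum>v\<in>A. w v * of_nat ((fst v choose a) * (snd v choose b))) = 0" .
  qed
  have K: "\<forall>m j p. n - j = m \<longrightarrow> j \<le> n \<longrightarrow> p \<le> n - j \<longrightarrow> (fst (B j) + p, snd (B j) + p) \<in> A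
      \<longrightarrow> w (fst (B j) + p, snd (B j) + p) = 0"
    using key[of B n A w] inj finA AS H unfolding off_def by blast
  have wz: "w v = 0" if "v \<in> A" for v
    using AS[OF that] K that by blast
  obtain v0 where v0: "v0 \<in> t" "u v0 \<noteq> 0" using nz by blast
  then obtain x0 where x0: "x0 \<in> T'" "v0 = vbar n x0" using tT by auto
  have "w x0 = 0" using wz x0 unfolding A_def by auto
  then show False using wT[OF x0(1)] x0 v0 by simp
qed

end
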